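(* Let $m,p\in\mathbb{N}$ with $m\ge p$, let $w=(w_1,\dots,w_m)^t\in\mathbb{R}^m$, and let $Z=(z_1,\dots,z_m)^t$ be an $m\times p$ real matrix such that any set of $p$ distinct row vectors of $Z$ is linearly independent. Then there exist $R>0$ and $\delta>0$ (possibly depending on $w$ and $Z$) such that $$\prod_{i=1}^m\frac{1}{1+|w_i-z_i^t\beta|}\le\frac{1}{(1+\delta|\beta|)^{m-p+1}}$$ for all $\beta\in\mathbb{R}^p$ with $|\beta|\ge R$.
   Context: $|\beta|$ is the Euclidean norm. *)

theory Defs
  imports "HOL-Analysis.Analysis"
begin

end

theory Submission
  imports Defs
begin

lemma span_nonzero_dot:
  fixes Z :: "nat \<Rightarrow> real ^ 'p"
  assumes "inj_on Z S" "independent (Z ` S)" "card S = CARD('p)" "u \<noteq> 0"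
  shows "\<exists>i\<in>S. Z i \<bullet> u \<noteq> 0"
proof (rule ccontr)
  assume "\<not> ?thesis"
  hence h: "\<forall>i\<in>S. Z i \<bullet> u = 0" by auto
  have fin: "finite S" using assms(3) card.infinite by fastforce
  have c: "card (Z ` S) = CARD('p)" using assms(1,3) card_image by metis
  have "dim (UNIV :: (real^'p) set) \<le> card (Z ` S)" using c by simp
  hence "span (Z ` S) = UNIV"
    using card_ge_dim_independent[of "Z ` S" UNIV] assms(2) by auto
  hence "u \<in> span (Z ` S)" by auto
  hence "orthogonal u u"
    by (rule orthogonal_to_span) (use h in \<open>auto simp: orthogonal_def inner_commute\<close>)
  thus False using assms(4) by (simp add: orthogonal_def)
qed

lemma bound_below:
  fixes Z :: "nat \<Rightarrow> real ^ 'p"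
  assumes "\<forall>u. u \<noteq> 0 \<longrightarrow> (\<exists>i\<in>S. Z i \<bullet> u \<noteq> 0)" "finite S"
  shows "\<exists>c>0. \<forall>\<beta>. c * norm \<beta> \<le> (\<Sum>i\<in>S. \<bar>Z i \<bullet> \<beta>\<bar>)"
proof -
  let ?h = "\<lambda>\<beta>::real^'p. (\<Sum>i\<in>S. \<bar>Z i \<bullet> \<beta>\<bar>)"
  have cont: "continuous_on (sphere 0 1) ?h"
    by (intro continuous_intros)
  have ne: "sphere (0::real^'p) 1 \<noteq> {}" by simp
  obtain u0 where u0: "u0 \<in> sphere 0 1" "\<forall>y\<in>sphere 0 1. ?h u0 \<le> ?h y"
    using continuous_attains_inf[OF compact_sphere ne cont] by blast
  have "u0 \<noteq> 0" using u0(1) by auto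
  then obtain i where i: "i \<in> S" "Z i \<bullet> u0 \<noteq> 0" using assms(1) by blast
  have pos: "?h u0 > 0"
    by (rule sum_pos2[OF assms(2) i(1)]) (use i in auto)
  have "?h u0 * norm \<beta> \<le> ?h \<beta>" for \<beta>
  proof (cases "\<beta> = 0")
    case True thus ?thesis by simp
  next
    case False
    let ?u = "(1 / norm \<beta>) *\<^sub>R \<beta>"
    have "?u \<in> sphere 0 1" using False by (simp add: norm_scaleR)
    hence "?h u0 \<le> ?h ?u" using u0 by blast
    also have "?h ?u = ?h \<beta> / norm \<beta>"
      by (simp add: abs_mult sum_divide_distrib)
    finally show ?thesis using False by (simp add: field_simps)
  qed
  thus ?thesis using pos by blast
qed

theorem lemmaS4:
  fixes m :: nat and w :: "nat \<Rightarrow> real" and Z :: "nat \<Rightarrow> real ^ 'p"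
  assumes "m \<ge> CARD('p)"
    and "\<forall>S. S \<subseteq> {1..m} \<and> card S = CARD('p) \<longrightarrow> inj_on Z S \<and> independent (Z ` S)"
  shows "\<exists>R > 0. \<exists>\<delta> > 0. \<forall>\<beta> :: real ^ 'p. norm \<beta> \<ge> R \<longrightarrow>
           (\<Prod>i = 1..m. 1 / (1 + \<bar>w i - Z i \<bullet> \<beta>\<bar>))
             \<le> 1 / (1 + \<delta> * norm \<beta>) ^ (m - CARD('p) + 1)"
proof -
  define SS where "SS = {S. S \<subseteq> {1..m} \<and> card S = CARD('p)}"
  have finSS: "finite SS" unfolding SS_def by (rule finite_subset[of _ "Pow {1..m}"]) auto
  have "\<forall>S\<in>SS. \<exists>c>0. \<forall>\<beta>. c * norm \<beta> \<le> (\<Sum>i\<in>S. \<bar>Z i \<bullet> \<beta>\<bar>)"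
  proof
    fix S assume S: "S \<in> SS"
    hence "S \<subseteq> {1..m}" "card S = CARD('p)" unfolding SS_def by auto
    moreover have "finite S" using \<open>S \<subseteq> {1..m}\<close> finite_subset by blast
    ultimately show "\<exists>c>0. \<forall>\<beta>. c * norm \<beta> \<le> (\<Sum>i\<in>S. \<bar>Z i \<bullet> \<beta>\<bar>)"
      using bound_below[of S Z] span_nonzero_dot[of Z S] assms(2) by blast
  qed
  then obtain cf where cf: "\<And>S. S \<in> SS \<Longrightarrow> cf S > 0 \<and> (\<forall>\<beta>. cf S * norm \<beta> \<le> (\<Sum>i\<in>S. \<bar>Z i \<bullet> \<beta>\<bar>))"
    by metis
  have "{1..CARD('p)} \<in> SS" unfolding SS_def using assms(1) by auto
  hence neSS: "SS \<noteq> {}" by auto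
  define c where "c = Min (cf ` SS) / CARD('p)"
  have cpos: "c > 0" unfolding c_def using finSS neSS cf by (simp add: Min_gr_iff)
  have key: "c * CARD('p) \<le> cf S" if "S \<in> SS" for S
    unfolding c_def using finSS that by simp
  define W where "W = (\<Sum>i\<in>{1..m}. \<bar>w i\<bar>)"
  have W0: "W \<ge> 0" unfolding W_def by (simp add: sum_nonneg)
  have Wi: "\<bar>w i\<bar> \<le> W" if "i \<in> {1..m}" for i
    unfolding W_def by (rule member_le_sum) (use that in auto)
  define \<delta> where "\<delta> = c / 2"
  define R where "R = 2 * W / c + 1"
  have Rpos: "R > 0" unfolding R_def using W0 cpos by (simp add: add_nonneg_pos)
  have "\<forall>\<beta> :: real ^ 'p. norm \<beta> \<ge> R \<longrightarrow>
           (\<Prod>i = 1..m. 1 / (1 + \<bar>w i - Z i \<bullet> \<beta>\<bar>))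
             \<le> 1 / (1 + \<delta> * norm \<beta>) ^ (m - CARD('p) + 1)"
  proof (intro allI impI)
    fix \<beta> :: "real ^ 'p"
    assume nb: "norm \<beta> \<ge> R"
    let ?r = "norm \<beta>"
    have rpos: "?r > 0" using nb Rpos by linarith
    define G where "G = {i\<in>{1..m}. \<bar>Z i \<bullet> \<beta>\<bar> \<ge> c * ?r}"
    define B where "B = {1..m} - G"
    have finB: "finite B" unfolding B_def by auto
    have cardB: "card B < CARD('p)"
    proof (rule ccontr)
      assume "\<not> card B < CARD('p)"
      then have "CARD('p) \<le> card B" by simp
      then obtain S where S: "S \<subseteq> B" "card S = CARD('p)" "finite S"
        by (rule obtain_subset_with_card_n)
      have SSS: "S \<in> SS" unfolding SS_def using S B_def by auto
      have "cf S * ?r \<le> (\<Sum>i\<in>S. \<bar>Z i \<bullet> \<beta>\<bar>)" using cf[OF SSS] by blast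
      also have "\<dots> < (\<Sum>i\<in>S. c * ?r)"
      proof (rule sum_strict_mono)
        show "finite S" by fact
        show "S \<noteq> {}" using S(2) by auto
        show "\<And>x. x \<in> S \<Longrightarrow> \<bar>Z x \<bullet> \<beta>\<bar> < c * ?r" using S(1) unfolding B_def G_def by auto
      qed
      also have "\<dots> = c * CARD('p) * ?r" using S(2) by simp
      finally have "cf S * ?r < c * CARD('p) * ?r" .
      hence "cf S < c * CARD('p)" using rpos by simp
      thus False using key[OF SSS] by simp
    qed
    have GB: "G \<union> B = {1..m}" "G \<inter> B = {}" unfolding B_def G_def by auto
    have cardG: "card G \<ge> m - CARD('p) + 1"
    proof -
      have "card G + card B = m" using GB card_Un_disjoint[of G B] finB
        by (metis card_atLeastAtMost diff_Suc_1 finite_Un finite_atLeastAtMost)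
      thus ?thesis using cardB assms(1) by linarith
    qed
    let ?f = "\<lambda>i. 1 / (1 + \<bar>w i - Z i \<bullet> \<beta>\<bar>)"
    let ?q = "1 / (1 + \<delta> * ?r)"
    have dr: "0 \<le> \<delta> * ?r" using rpos cpos unfolding \<delta>_def by simp
    have q01: "0 \<le> ?q" "?q \<le> 1" using dr by auto
    have "(\<Prod>i = 1..m. ?f i) = prod ?f G * prod ?f B"
      using GB prod.union_disjoint[of G B ?f] finB
      by (metis finite_Un finite_atLeastAtMost)
    also have "\<dots> \<le> prod ?f G * 1"
    proof (rule mult_left_mono)
      show "prod ?f B \<le> 1" by (rule prod_le_1) auto
      show "0 \<le> prod ?f G" by (rule prod_nonneg) auto
    qed
    also have "prod ?f G \<le> prod (\<lambda>_. ?q) G"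
    proof (rule prod_mono)
      fix i assume i: "i \<in> G"
      have "\<bar>w i\<bar> \<le> W" using i Wi unfolding G_def by auto
      moreover have "c * ?r \<le> \<bar>Z i \<bullet> \<beta>\<bar>" using i unfolding G_def by auto
      moreover have "2 * W \<le> c * ?r"
      proof -
        have "2 * W / c \<le> ?r" using nb unfolding R_def by linarith
        thus ?thesis using cpos by (simp add: field_simps)
      qed
      ultimately have "\<delta> * ?r \<le> \<bar>w i - Z i \<bullet> \<beta>\<bar>" unfolding \<delta>_def by linarith
      moreover have "0 \<le> \<delta> * ?r" using cpos rpos unfolding \<delta>_def by simp
      ultimately show "0 \<le> ?f i \<and> ?f i \<le> ?q"
        by (auto intro!: divide_left_mono)
    qed
    also have "prod (\<lambda>_. ?q) G = ?q ^ card G" by simp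
    also have "\<dots> \<le> ?q ^ (m - CARD('p) + 1)"
      by (rule power_decreasing[OF cardG q01])
    also have "\<dots> = 1 / (1 + \<delta> * ?r) ^ (m - CARD('p) + 1)"
      by (simp add: power_one_over)
    finally show "(\<Prod>i = 1..m. ?f i) \<le> 1 / (1 + \<delta> * ?r) ^ (m - CARD('p) + 1)" by simp
  qed
  moreover have "\<delta> > 0" unfolding \<delta>_def using cpos by simp
  ultimately show ?thesis using Rpos by blast
qed

end
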